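(* Let $0\le R'\le (1-p)^{|\mathcal E|}$ and let $M\ge1$ be an integer. Then, in the symmetric-erasure retransmission model described in the context, $$P\Big(\min_{v\in\mathcal V} n_v(M) < R'M\Big)\;\le\; N\,2^{-M\,D\left(R',(1-p)^{|\mathcal E|}\right)} .$$ In particular, for every $R'<(1-p)^{|\mathcal E|}$ this probability decays exponentially in $M$ (for every $p<1$).
   Context: Let $\mathcal G=(\mathcal V,\mathcal E)$ be a finite connected undirected simple graph with $N=|\mathcal V|$ vertices and maximum degree $\Delta$; $\mathcal N_v$ denotes the set of neighbours of $v$. Fix an erasure probability $p\in[0,1]$. Erasures are symmetric: for every undirected edge $e\in\mathcal E$ and every round $t\ge 1$ there is a random variable $S^e_t\in\{0,1\}$ with $P(S^e_t=1)=1-p$ ($S^e_t=1$ means the edge works in round $t$, $S^e_t=0$ means the packets in both directions on $e$ are erased in round $t$), and all these variables are mutually independent. The retransmission protocol for distributed consensus is described by integer state variables $n_{vu}(t)$, for every ordered pair $(v,u)$ with $u\in\mathcal N_v$ and every $t\ge 0$ (the index of the latest iterate of node $u$ available at node $v$ after round $t$), together with $n_v(t)=1+\min_{u\in\mathcal N_v} n_{vu}(t)$ (the number of iterations of the consensus update $x^v_{k+1}=x^v_k-\epsilon\sum_{u\in\mathcal N_v}(x^v_k-x^u_k)$ that node $v$ has completed after round $t$). Initially $n_{vu}(0)=-1$ for all such pairs (so $n_v(0)=0$), and for all $t\ge 0$ $$n_{vu}(t+1)=n_{vu}(t)+S^{\{u,v\}}_{t+1}\cdot\mathbf 1\{n_u(t)>n_{vu}(t)\}.$$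 Node $u$ is said to transmit a "wait" to node $v$ in round $t+1$ iff $n_{vu}(t)=n_u(t)$. $D(q,p)=q\log_2\frac qp+(1-q)\log_2\frac{1-q}{1-p}$ is the binary Kullback–Leibler divergence (with $0\log 0=0$). *)

theory Defs
  imports "HOL-Probability.Probability"
begin

definition simple_graph :: "'a set \<Rightarrow> 'a set set \<Rightarrow> bool" where
  "simple_graph V E \<longleftrightarrow> finite V \<and>
     (\<forall>e\<in>E. \<exists>u v. u \<in> V \<and> v \<in> V \<and> u \<noteq> v \<and> e = {u, v})"

definition connected_graph :: "'a set \<Rightarrow> 'a set set \<Rightarrow> bool" where
  "connected_graph V E \<longleftrightarrow> (\<forall>u\<in>V. \<forall>v\<in>V. (\<lambda>x y. {x, y} \<in> E)\<^sup>*\<^sup>* u v)"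

definition nbrs :: "'a set set \<Rightarrow> 'a \<Rightarrow> 'a set" where
  "nbrs E v = {u. {u, v} \<in> E}"

text \<open>Protocol state.  S e t = True means edge e works in round t.
  link_state E S t v u = n_vu(t);  node_iters E S t v = n_v(t).\<close>

fun link_state :: "'a set set \<Rightarrow> ('a set \<Rightarrow> nat \<Rightarrow> bool) \<Rightarrow> nat \<Rightarrow> 'a \<Rightarrow> 'a \<Rightarrow> int" where
  "link_state E S 0 = (\<lambda>v u. -1)"
| "link_state E S (Suc t) =
     (let n = link_state E S t;
          nd = (\<lambda>w. 1 + Min (n w ` nbrs E w))
      in (\<lambda>v u. n v u + (if S {u, v} (Suc t) \<and> nd u > n v u then 1 else 0)))"

definition node_iters :: "'a set set \<Rightarrow> ('a set \<Rightarrow> nat \<Rightarrow> bool) \<Rightarrow> nat \<Rightarrow> 'a \<Rightarrow> int" where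
  "node_iters E S t v = 1 + Min (link_state E S t v ` nbrs E v)"

text \<open>Erasure pattern for rounds 1..M: independent Bernoulli(1-p) variables S^e_t,
  e \<in> E, 1 \<le> t \<le> M (outside this index set the value is irrelevant, fixed to False).\<close>

definition erasure_pmf :: "'a set set \<Rightarrow> real \<Rightarrow> nat \<Rightarrow> ('a set \<times> nat \<Rightarrow> bool) pmf" where
  "erasure_pmf E p M = Pi_pmf (E \<times> {1..M}) False (\<lambda>_. bernoulli_pmf (1 - p))"

text \<open>Binary KL divergence (base 2), with 0 log 0 = 0 and t log(t/0) = +\<infinity> for t > 0.\<close>

definition kl_term :: "real \<Rightarrow> real \<Rightarrow> ereal" where
  "kl_term t b = (if t = 0 then 0 else if b = 0 then \<infinity> else ereal (t * log 2 (t / b)))"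

definition KL_div :: "real \<Rightarrow> real \<Rightarrow> ereal" where
  "KL_div q p = kl_term q p + kl_term (1 - q) (1 - p)"

definition pow2_neg :: "nat \<Rightarrow> ereal \<Rightarrow> real" where
  "pow2_neg M D = (if D = \<infinity> then 0 else 2 powr (- real M * real_of_ereal D))"

end

theory Submission imports Defs begin

lemma link_Suc: "link_state E S (Suc t) v u = link_state E S t v u +
   (if S {u, v} (Suc t) \<and> node_iters E S t u > link_state E S t v u then 1 else 0)"
  by (simp add: Let_def node_iters_def)

declare link_state.simps(2)[simp del]

lemma link_mono_Suc: "link_state E S t v u \<le> link_state E S (Suc t) v u"
  by (simp add: link_Suc)

lemma node_mono_Suc:
  assumes "finite (nbrs E v)" "nbrs E v \<noteq> {}"
  shows "node_iters E S t v \<le> node_iters E S (Suc t) v"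
proof -
  obtain u where u: "u \<in> nbrs E v" "link_state E S (Suc t) v u = Min (link_state E S (Suc t) v ` nbrs E v)"
    using assms by (metis (no_types, lifting) Min_in finite_imageI image_iff image_is_empty)
  have "Min (link_state E S t v ` nbrs E v) \<le> link_state E S t v u"
    using assms u by auto
  also have "\<dots> \<le> link_state E S (Suc t) v u" by (rule link_mono_Suc)
  finally show ?thesis unfolding node_iters_def using u by simp
qed

lemma node_lower:
  assumes "finite (nbrs E v)" "nbrs E v \<noteq> {}" "\<And>u. u \<in> nbrs E v \<Longrightarrow> m \<le> link_state E S t v u"
  shows "1 + m \<le> node_iters E S t v"
proof -
  obtain u where u: "u \<in> nbrs E v" "link_state E S t v u = Min (link_state E S t v ` nbrs E v)"
    using assms by (metis (no_types, lifting) Min_in finite_imageI image_iff image_is_empty)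
  show ?thesis unfolding node_iters_def using u assms by simp
qed

lemma node_upper:
  assumes "finite (nbrs E v)" "u \<in> nbrs E v"
  shows "node_iters E S t v \<le> 1 + link_state E S t v u"
  unfolding node_iters_def using assms by simp

locale G =
  fixes V :: "'a set" and E :: "'a set set"
  assumes fin: "\<And>v. v \<in> V \<Longrightarrow> finite (nbrs E v)"
    and ne: "\<And>v. v \<in> V \<Longrightarrow> nbrs E v \<noteq> {}"
    and nbV: "\<And>v u. v \<in> V \<Longrightarrow> u \<in> nbrs E v \<Longrightarrow> u \<in> V"
begin

lemma inv: "u \<in> V \<Longrightarrow> link_state E S t v u \<le> node_iters E S t u"
proof (induction t arbitrary: v)
  case 0
  have "1 + (-1) \<le> node_iters E S 0 u"
    by (rule node_lower[OF fin[OF 0] ne[OF 0]]) simp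
  then show ?case by simp
next
  case (Suc t)
  have "link_state E S (Suc t) v u \<le> node_iters E S t u"
    using Suc.IH[OF Suc.prems, of v] by (simp add: link_Suc)
  also have "\<dots> \<le> node_iters E S (Suc t) u" using node_mono_Suc[OF fin[OF Suc.prems] ne[OF Suc.prems]] .
  finally show ?case .
qed

lemma step:
  assumes v: "v \<in> V" and all: "\<And>e. e \<in> E \<Longrightarrow> S e (Suc t)"
    and m: "\<And>w. w \<in> V \<Longrightarrow> m \<le> node_iters E S t w"
  shows "1 + m \<le> node_iters E S (Suc t) v"
proof (rule node_lower[OF fin[OF v] ne[OF v]])
  fix u assume u: "u \<in> nbrs E v"
  have uV: "u \<in> V" using nbV v u .
  have Su: "S {u, v} (Suc t)" using all u by (simp add: nbrs_def)
  show "m \<le> link_state E S (Suc t) v u"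
  proof (cases "node_iters E S t u > link_state E S t v u")
    case True
    have "m \<le> node_iters E S t v" using m v .
    also have "\<dots> \<le> 1 + link_state E S t v u" using node_upper[OF fin[OF v] u] by blast
    finally show ?thesis using True Su by (simp add: link_Suc)
  next
    case False
    have "m \<le> node_iters E S t u" using m uV .
    also have "\<dots> \<le> link_state E S t v u" using False by simp
    finally show ?thesis using False by (simp add: link_Suc)
  qed
qed

lemma count_bound:
  "v \<in> V \<Longrightarrow> int (card {s \<in> {1..t}. \<forall>e\<in>E. S e s}) \<le> node_iters E S t v"
proof (induction t arbitrary: v)
  case 0
  have "1 + (-1) \<le> node_iters E S 0 v"
    by (rule node_lower[OF fin[OF 0] ne[OF 0]]) simp
  then show ?case by simp
next
  case (Suc t)
  show ?case
  proof (cases "\<forall>e\<in>E. S e (Suc t)")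
    case True
    have "{s \<in> {1..Suc t}. \<forall>e\<in>E. S e s} = insert (Suc t) {s \<in> {1..t}. \<forall>e\<in>E. S e s}"
      using True by auto
    hence "card {s \<in> {1..Suc t}. \<forall>e\<in>E. S e s} = Suc (card {s \<in> {1..t}. \<forall>e\<in>E. S e s})"
      by simp
    moreover have "1 + int (card {s \<in> {1..t}. \<forall>e\<in>E. S e s}) \<le> node_iters E S (Suc t) v"
      by (rule step[OF Suc.prems]) (use True Suc.IH in blast)+
    ultimately show ?thesis by simp
  next
    case False
    have "{s \<in> {1..Suc t}. \<forall>e\<in>E. S e s} = {s \<in> {1..t}. \<forall>e\<in>E. S e s}"
      using False by (auto simp: le_Suc_eq)
    then show ?thesis using Suc.IH[OF Suc.prems] node_mono_Suc[OF fin[OF Suc.prems] ne[OF Suc.prems], of S t]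
      by simp
  qed
qed

end
lemma finite_set_Pi_pmf_bool:
  assumes "finite T"
  shows "finite (set_pmf (Pi_pmf T False (D :: 'b \<Rightarrow> bool pmf)))"
proof -
  have "{f::'b\<Rightarrow>bool. \<forall>x. x \<notin> T \<longrightarrow> f x = False} \<subseteq> (\<lambda>S x. x \<in> S) ` Pow T"
  proof
    fix f :: "'b \<Rightarrow> bool" assume "f \<in> {f. \<forall>x. x \<notin> T \<longrightarrow> f x = False}"
    hence "f = (\<lambda>x. x \<in> {y\<in>T. f y})" by auto
    thus "f \<in> (\<lambda>S x. x \<in> S) ` Pow T" by blast
  qed
  thus ?thesis using set_Pi_pmf_subset[OF assms, of False D] assms
    by (meson finite_Pow_iff finite_imageI finite_subset subset_trans)
qed

lemma prob_le_expectation: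
  fixes P :: "'c pmf"
  assumes "finite (set_pmf P)" "\<And>x. x \<in> A \<Longrightarrow> 1 \<le> g x" "\<And>x. 0 \<le> g x"
  shows "measure_pmf.prob P A \<le> measure_pmf.expectation P g"
proof -
  have "measure_pmf.prob P A = measure_pmf.expectation P (indicator A)"
    by simp
  also have "\<dots> \<le> measure_pmf.expectation P g"
    by (intro integral_mono integrable_measure_pmf_finite assms)
       (auto simp: indicator_def assms)
  finally show ?thesis .
qed

lemma chernoff:
  fixes D :: "bool pmf" and T :: "'b set"
  assumes T: "finite T" "card T = M" and q: "q = pmf D True"
    and r: "0 < r" "r < 1" "r \<le> q" "q < 1"
  shows "measure_pmf.prob (Pi_pmf T False (\<lambda>_. D)) {f. real (card {t\<in>T. f t}) < r * M}
         \<le> exp (- real M * (r * ln (r/q) + (1-r) * ln ((1-r)/(1-q))))"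
proof -
  define l where "l = r * (1-q) / (q * (1-r))"
  have q0: "0 < q" using r by simp
  have l0: "0 < l" using r q0 unfolding l_def by (simp add: divide_pos_pos)
  have l1: "l \<le> 1" using r q0 unfolding l_def by (simp add: field_simps algebra_simps)
  define h where "h = (\<lambda>b. if b then l else (1::real))"
  let ?P = "Pi_pmf T False (\<lambda>_. D)"
  let ?g = "\<lambda>f. l powr (- (r * M)) * (\<Prod>t\<in>T. h (f t))"
  have prodh: "(\<Prod>t\<in>T. h (f t)) = l ^ card {t\<in>T. f t}" for f
    unfolding h_def using T by (simp add: prod.If_cases Int_def)
  have "measure_pmf.prob ?P {f. real (card {t\<in>T. f t}) < r * M} \<le> measure_pmf.expectation ?P ?g"
  proof (rule prob_le_expectation)
    show "finite (set_pmf ?P)" using finite_set_Pi_pmf_bool T by blast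
  next
    fix f assume "f \<in> {f. real (card {t\<in>T. f t}) < r * M}"
    hence lt: "real (card {t\<in>T. f t}) - r * M < 0" by simp
    have "?g f = l powr (real (card {t\<in>T. f t}) - r * M)"
      using l0 by (simp add: prodh powr_diff powr_realpow powr_minus divide_inverse mult.commute)
    also have "\<dots> \<ge> 1"
    proof -
      have "ln l \<le> 0" using l0 l1 by simp
      hence "0 \<le> (real (card {t\<in>T. f t}) - r * M) * ln l" using lt by (intro mult_nonpos_nonpos) auto
      thus ?thesis using l0 by (simp add: powr_def)
    qed
    finally show "1 \<le> ?g f" .
  next
    fix f show "0 \<le> ?g f" using l0 by (simp add: prodh)
  qed
  also have "measure_pmf.expectation ?P ?g = l powr (- (r * M)) * measure_pmf.expectation ?P (\<lambda>f. \<Prod>t\<in>T. h (f t))"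
    by simp
  also have "measure_pmf.expectation ?P (\<lambda>f. \<Prod>t\<in>T. h (f t)) = (\<Prod>t\<in>T. measure_pmf.expectation D h)"
    by (rule expectation_prod_Pi_pmf) (use T l0 in \<open>auto intro: integrable_measure_pmf_finite simp: h_def\<close>)
  also have "measure_pmf.expectation D h = l * q + (1 - q)"
    by (subst integral_measure_pmf_real[where A = UNIV]) (auto simp: h_def q pmf_False_conv_True UNIV_bool)
  also have "(\<Prod>t\<in>T. l * q + (1 - q)) = ((1-q)/(1-r)) ^ M"
  proof -
    have "l * q + (1 - q) = (1-q)/(1-r)" using r q0 unfolding l_def by (simp add: field_simps)
    thus ?thesis using T by simp
  qed
  also have "l powr (- (r * M)) * ((1-q)/(1-r)) ^ M = exp (- real M * (r * ln (r/q) + (1-r) * ln ((1-r)/(1-q))))"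
  proof -
    have "l powr (- (r * M)) = exp (- (r*M) * ln l)" using l0 by (simp add: powr_def)
    moreover have "((1-q)/(1-r)) ^ M = exp (M * ln ((1-q)/(1-r)))"
    proof -
      have pos: "0 < (1-q)/(1-r)" using r by simp
      have "exp (M * ln ((1-q)/(1-r))) = exp (ln (((1-q)/(1-r)) ^ M))" using pos by (simp add: ln_realpow)
      also have "\<dots> = ((1-q)/(1-r)) ^ M" using pos by simp
      finally show ?thesis by simp
    qed
    moreover have "ln l = ln r + ln (1-q) - ln q - ln (1-r)"
      using r q0 unfolding l_def by (simp add: ln_div ln_mult)
    moreover have "ln (r/q) = ln r - ln q" "ln ((1-r)/(1-q)) = ln (1-r) - ln (1-q)"
        "ln ((1-q)/(1-r)) = ln (1-q) - ln (1-r)"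
      using r q0 by (simp_all add: ln_div)
    ultimately have "l powr (- (r * M)) * ((1-q)/(1-r)) ^ M =
       exp (- (r*M) * (ln r + ln (1-q) - ln q - ln (1-r)) + M * (ln (1-q) - ln (1-r)))"
      and "exp (- real M * (r * ln (r/q) + (1-r) * ln ((1-r)/(1-q)))) =
       exp (- real M * (r * (ln r - ln q) + (1-r) * (ln (1-r) - ln (1-q))))"
      by (simp_all add: exp_add[symmetric])
    moreover have "- (r*M) * (ln r + ln (1-q) - ln q - ln (1-r)) + M * (ln (1-q) - ln (1-r))
       = - real M * (r * (ln r - ln q) + (1-r) * (ln (1-r) - ln (1-q)))"
      by (simp add: algebra_simps)
    ultimately show ?thesis by metis
  qed
  finally show ?thesis .
qed

lemma Pi_pmf_curry:
  assumes A: "finite A" and B: "finite B"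
  shows "Pi_pmf (A \<times> B) d (\<lambda>_. P) =
         map_pmf (\<lambda>H (a,b). H b a) (Pi_pmf B (\<lambda>_. d) (\<lambda>_. Pi_pmf A d (\<lambda>_. P)))"
proof (rule pmf_eqI)
  fix \<omega> :: "'a \<times> 'b \<Rightarrow> 'c"
  let ?c = "\<lambda>H (a,b). H b a"
  have inj: "inj (?c :: ('b \<Rightarrow> 'a \<Rightarrow> 'c) \<Rightarrow> _)"
  proof (rule injI)
    fix H H' :: "'b \<Rightarrow> 'a \<Rightarrow> 'c" assume "?c H = ?c H'"
    hence "\<And>a b. H b a = H' b a" by (metis case_prod_conv)
    thus "H = H'" by blast
  qed
  have om: "\<omega> = ?c (\<lambda>b a. \<omega> (a,b))" by auto
  have "pmf (map_pmf ?c (Pi_pmf B (\<lambda>_. d) (\<lambda>_. Pi_pmf A d (\<lambda>_. P)))) \<omega>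
      = pmf (Pi_pmf B (\<lambda>_. d) (\<lambda>_. Pi_pmf A d (\<lambda>_. P))) (\<lambda>b a. \<omega> (a,b))"
    by (subst om, subst pmf_map_inj'[OF inj]) simp
  also have "\<dots> = pmf (Pi_pmf (A \<times> B) d (\<lambda>_. P)) \<omega>"
  proof (cases "\<forall>x. x \<notin> A \<times> B \<longrightarrow> \<omega> x = d")
    case True
    have "pmf (Pi_pmf B (\<lambda>_. d) (\<lambda>_. Pi_pmf A d (\<lambda>_. P))) (\<lambda>b a. \<omega> (a,b))
        = (\<Prod>b\<in>B. pmf (Pi_pmf A d (\<lambda>_. P)) (\<lambda>a. \<omega> (a,b)))"
      using True B by (subst pmf_Pi) (auto simp: fun_eq_iff)
    also have "\<dots> = (\<Prod>b\<in>B. \<Prod>a\<in>A. pmf P (\<omega> (a,b)))"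
      using True A by (intro prod.cong refl, subst pmf_Pi) auto
    also have "\<dots> = (\<Prod>a\<in>A. \<Prod>b\<in>B. pmf P (\<omega> (a,b)))"
      by (rule prod.swap)
    also have "\<dots> = (\<Prod>x\<in>A \<times> B. pmf P (\<omega> x))"
      by (simp add: prod.cartesian_product)
    also have "\<dots> = pmf (Pi_pmf (A \<times> B) d (\<lambda>_. P)) \<omega>"
      using True A B by (subst pmf_Pi) auto
    finally show ?thesis .
  next
    case False
    then obtain a b where ab: "(a,b) \<notin> A \<times> B" "\<omega> (a,b) \<noteq> d" by auto
    have "pmf (Pi_pmf B (\<lambda>_. d) (\<lambda>_. Pi_pmf A d (\<lambda>_. P))) (\<lambda>b a. \<omega> (a,b)) = 0"
    proof (cases "b \<in> B")
      case False
      thus ?thesis using ab B by (subst pmf_Pi) (auto simp: fun_eq_iff)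
    next
      case True
      hence "a \<notin> A" using ab by auto
      hence "pmf (Pi_pmf A d (\<lambda>_. P)) (\<lambda>a. \<omega> (a,b)) = 0" using ab A by (subst pmf_Pi) auto
      thus ?thesis using True B by (subst pmf_Pi) auto
    qed
    moreover have "pmf (Pi_pmf (A \<times> B) d (\<lambda>_. P)) \<omega> = 0"
      using False A B by (subst pmf_Pi) auto
    ultimately show ?thesis by simp
  qed
  finally show "pmf (Pi_pmf (A \<times> B) d (\<lambda>_. P)) \<omega> =
      pmf (map_pmf ?c (Pi_pmf B (\<lambda>_. d) (\<lambda>_. Pi_pmf A d (\<lambda>_. P)))) \<omega>" by simp
qed

lemma erasure_map:
  assumes E: "finite E" "E \<noteq> {}"
  shows "map_pmf (\<lambda>\<omega> t. \<forall>e\<in>E. \<omega> (e, t)) (erasure_pmf E p M) =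
    Pi_pmf {1..M} False (\<lambda>_. map_pmf (\<lambda>f. \<forall>e\<in>E. f e) (Pi_pmf E False (\<lambda>_. bernoulli_pmf (1 - p))))"
proof -
  have "map_pmf (\<lambda>\<omega> t. \<forall>e\<in>E. \<omega> (e, t)) (erasure_pmf E p M) =
     map_pmf (\<lambda>H. (\<lambda>f. \<forall>e\<in>E. f e) \<circ> H) (Pi_pmf {1..M} (\<lambda>_. False) (\<lambda>_. Pi_pmf E False (\<lambda>_. bernoulli_pmf (1 - p))))"
    unfolding erasure_pmf_def using E
    apply (subst Pi_pmf_curry)
      apply simp_all
    apply (simp add: pmf.map_comp comp_def)
    apply (intro map_pmf_cong)
     apply (auto simp: fun_eq_iff)
    done
  also have "\<dots> = Pi_pmf {1..M} False (\<lambda>_. map_pmf (\<lambda>f. \<forall>e\<in>E. f e) (Pi_pmf E False (\<lambda>_. bernoulli_pmf (1 - p))))"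
    using E by (subst Pi_pmf_map) auto
  finally show ?thesis .
qed

lemma pmf_all_True:
  assumes "finite E" "0 \<le> p" "p \<le> 1"
  shows "pmf (map_pmf (\<lambda>f. \<forall>e\<in>E. f e) (Pi_pmf E False (\<lambda>_. bernoulli_pmf (1 - p)))) True = (1 - p) ^ card E"
proof -
  have "{f. \<forall>e\<in>E. f e} = Pi E (\<lambda>_. {True})" by (auto simp: Pi_def)
  hence "pmf (map_pmf (\<lambda>f. \<forall>e\<in>E. f e) (Pi_pmf E False (\<lambda>_. bernoulli_pmf (1 - p)))) True
     = measure_pmf.prob (Pi_pmf E False (\<lambda>_. bernoulli_pmf (1 - p))) (Pi E (\<lambda>_. {True}))"
    by (simp add: pmf_map vimage_def)
  also have "\<dots> = (\<Prod>e\<in>E. measure_pmf.prob (bernoulli_pmf (1 - p)) {True})"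
    using assms by (simp add: measure_Pi_pmf_Pi)
  also have "\<dots> = (1 - p) ^ card E"
    using assms by (simp add: measure_pmf_single)
  finally show ?thesis .
qed


lemma graph_facts:
  assumes sg: "simple_graph V E" and cg: "connected_graph V E" and c2: "card V \<ge> 2"
  shows "G V E" and "finite E" and "E \<noteq> {}"
proof -
  have fV: "finite V" using sg by (simp add: simple_graph_def)
  have EV: "e \<subseteq> V" if e: "e \<in> E" for e
  proof -
    obtain a b where "a \<in> V" "b \<in> V" "e = {a, b}" using sg e unfolding simple_graph_def by blast
    thus ?thesis by simp
  qed
  have nbV: "u \<in> V" if "u \<in> nbrs E v" for v u
  proof -
    have "{u, v} \<in> E" using that by (simp add: nbrs_def)
    from EV[OF this] show ?thesis by simp
  qed
  have nex: "nbrs E v \<noteq> {}" if v: "v \<in> V" for v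
  proof -
    obtain w where w: "w \<in> V" "w \<noteq> v"
    proof -
      have "\<not> V \<subseteq> {v}"
      proof
        assume "V \<subseteq> {v}"
        hence "card V \<le> card {v}" by (intro card_mono) auto
        thus False using c2 by simp
      qed
      thus ?thesis using that by blast
    qed
    have "(\<lambda>x y. {x, y} \<in> E)\<^sup>*\<^sup>* v w" using cg v w unfolding connected_graph_def by blast
    then obtain y where "{v, y} \<in> E"
      using w(2) by (cases rule: converse_rtranclpE) auto
    hence "y \<in> nbrs E v" by (simp add: nbrs_def insert_commute)
    thus ?thesis by blast
  qed
  show "G V E"
  proof
    fix v assume "v \<in> V"
    have "nbrs E v \<subseteq> V" using nbV by blast
    thus "finite (nbrs E v)" using fV by (rule finite_subset)
    show "nbrs E v \<noteq> {}" using nex \<open>v \<in> V\<close> .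
  next
    fix v u assume "v \<in> V" "u \<in> nbrs E v" thus "u \<in> V" using nbV by simp
  qed
  have "E \<subseteq> Pow V" using EV by blast
  thus "finite E" using fV by (simp add: finite_subset)
  have "V \<noteq> {}" using c2 by (metis card.empty not_numeral_le_zero)
  then obtain v where "v \<in> V" by blast
  then obtain u where "u \<in> nbrs E v" using nex by blast
  thus "E \<noteq> {}" by (auto simp: nbrs_def)
qed

theorem theorem2:
  fixes V :: "'a set" and E :: "'a set set" and p R' :: real and M :: nat
  assumes "simple_graph V E" and "connected_graph V E" and "card V \<ge> 2"
    and "0 \<le> p" and "p \<le> 1"
    and "0 \<le> R'" and "R' \<le> (1 - p) ^ card E"
    and "M \<ge> 1"
  shows "measure_pmf.prob (erasure_pmf E p M)
           {\<omega>. \<exists>v\<in>V. real_of_int (node_iters E (\<lambda>e t. \<omega> (e, t)) M v) < R' * real M}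
         \<le> real (card V) * pow2_neg M (KL_div R' ((1 - p) ^ card E))"
proof -
  note gf = graph_facts[OF assms(1-3)]
  interpret G V E by (rule gf(1))
  define q where "q = (1 - p) ^ card E"
  define D where "D = map_pmf (\<lambda>f. \<forall>e\<in>E. f e) (Pi_pmf E False (\<lambda>_. bernoulli_pmf (1 - p)))"
  have qD: "pmf D True = q" unfolding D_def q_def using pmf_all_True gf assms by blast
  have q01: "0 \<le> q" "q \<le> 1" unfolding q_def using assms by (auto intro: power_le_one)
  have N1: "1 \<le> real (card V)" using assms(3) by simp
  define Ev where "Ev = {\<omega>. \<exists>v\<in>V. real_of_int (node_iters E (\<lambda>e t. \<omega> (e, t)) M v) < R' * real M}"
  define B where "B = {f. real (card {t\<in>{1..M}. f t}) < R' * real M}"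
  have sub: "Ev \<subseteq> (\<lambda>\<omega> t. \<forall>e\<in>E. \<omega> (e, t)) -` B"
  proof
    fix \<omega> assume "\<omega> \<in> Ev"
    then obtain v where v: "v \<in> V" "real_of_int (node_iters E (\<lambda>e t. \<omega> (e, t)) M v) < R' * real M"
      unfolding Ev_def by blast
    have "int (card {s \<in> {1..M}. \<forall>e\<in>E. \<omega> (e, s)}) \<le> node_iters E (\<lambda>e t. \<omega> (e, t)) M v"
      using count_bound[OF v(1), of M "\<lambda>e t. \<omega> (e, t)"] by simp
    hence "real (card {s \<in> {1..M}. \<forall>e\<in>E. \<omega> (e, s)}) \<le> real_of_int (node_iters E (\<lambda>e t. \<omega> (e, t)) M v)"
      by linarith
    thus "\<omega> \<in> (\<lambda>\<omega> t. \<forall>e\<in>E. \<omega> (e, t)) -` B" using v(2) unfolding B_def by simp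
  qed
  have "measure_pmf.prob (erasure_pmf E p M) Ev \<le>
        measure_pmf.prob (erasure_pmf E p M) ((\<lambda>\<omega> t. \<forall>e\<in>E. \<omega> (e, t)) -` B)"
    by (rule measure_pmf.finite_measure_mono[OF sub]) simp
  also have "\<dots> = measure_pmf.prob (map_pmf (\<lambda>\<omega> t. \<forall>e\<in>E. \<omega> (e, t)) (erasure_pmf E p M)) B"
    by (simp add: measure_map_pmf)
  also have "\<dots> = measure_pmf.prob (Pi_pmf {1..M} False (\<lambda>_. D)) B"
    using erasure_map[OF gf(2) gf(3), of p M] unfolding D_def by simp
  finally have P1: "measure_pmf.prob (erasure_pmf E p M) Ev \<le> measure_pmf.prob (Pi_pmf {1..M} False (\<lambda>_. D)) B" .
  have nonneg: "0 \<le> pow2_neg M (KL_div R' q)" by (simp add: pow2_neg_def)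
  have goal: "measure_pmf.prob (Pi_pmf {1..M} False (\<lambda>_. D)) B \<le> pow2_neg M (KL_div R' q)"
  proof (cases "R' = 0")
    case True
    hence "B = {}" unfolding B_def by auto
    thus ?thesis using nonneg by simp
  next
    case R0: False
    show ?thesis
    proof (cases "q = 1")
      case q1: True
      show ?thesis
      proof (cases "R' = 1")
        case True
        hence "KL_div R' q = 0" using q1 by (simp add: KL_div_def kl_term_def)
        thus ?thesis by (simp add: pow2_neg_def)
      next
        case False
        hence R1: "R' < 1" using assms(7) q1 unfolding q_def by simp
        have "D = return_pmf True"
        proof (rule pmf_eqI)
          fix b :: bool
          show "pmf D b = pmf (return_pmf True) b"
            by (cases b) (simp_all add: qD q1 pmf_False_conv_True[of D])
        qed
        hence "Pi_pmf {1..M} False (\<lambda>_. D) = return_pmf (\<lambda>x. x \<in> {1..M})" by simp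
        moreover have "(\<lambda>x. x \<in> {1..M}) \<notin> B"
        proof -
          have e: "{t\<in>{1..M}. t \<in> {1..M}} = {1..M}" by blast
          have "card {t\<in>{1..M}. t \<in> {1..M}} = M" unfolding e by simp
          moreover have "R' * real M \<le> real M" using R1 assms(6) by (intro mult_left_le_one_le) auto
          ultimately show ?thesis unfolding B_def by (simp only: mem_Collect_eq)
        qed
        ultimately show ?thesis using nonneg by simp
      qed
    next
      case q1: False
      have r: "0 < R'" "R' < 1" "R' \<le> q" "q < 1"
        using R0 assms(6,7) q1 q01 unfolding q_def by auto
      have q0: "0 < q" using r by simp
      have "measure_pmf.prob (Pi_pmf {1..M} False (\<lambda>_. D)) B
          \<le> exp (- real M * (R' * ln (R'/q) + (1-R') * ln ((1-R')/(1-q))))"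
        unfolding B_def by (rule chernoff) (use qD r in auto)
      also have "\<dots> = pow2_neg M (KL_div R' q)"
      proof -
        have "KL_div R' q = ereal (R' * log 2 (R'/q) + (1-R') * log 2 ((1-R')/(1-q)))"
          using r q0 by (simp add: KL_div_def kl_term_def)
        hence "pow2_neg M (KL_div R' q) = 2 powr (- real M * (R' * log 2 (R'/q) + (1-R') * log 2 ((1-R')/(1-q))))"
          by (simp add: pow2_neg_def)
        also have "\<dots> = exp (- real M * (R' * ln (R'/q) + (1-R') * ln ((1-R')/(1-q))))"
        proof -
          have l2: "ln 2 > (0::real)" by simp
          have "- real M * (R' * log 2 (R'/q) + (1-R') * log 2 ((1-R')/(1-q))) * ln 2
              = - real M * (R' * ln (R'/q) + (1-R') * ln ((1-R')/(1-q)))"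
            using l2 by (simp add: log_def field_simps)
          thus ?thesis by (simp add: powr_def)
        qed
        finally show ?thesis by simp
      qed
      finally show ?thesis .
    qed
  qed
  have "measure_pmf.prob (erasure_pmf E p M) Ev \<le> pow2_neg M (KL_div R' q)"
    using P1 goal by linarith
  also have "\<dots> \<le> real (card V) * pow2_neg M (KL_div R' q)"
    using N1 nonneg by (simp add: mult_le_cancel_right1)
  finally show ?thesis unfolding Ev_def q_def .
qed

end
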